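(* Let $(M,g,J)$ be almost Hermitian of even complex dimension $m=2n$, $n\ge1$, with a complex spinor bundle $S^cM$ of a spin$^c$ structure. Set $$\alpha_1=\sqrt{\tfrac{m-1}{m+1}},\ \ \beta_1=m+1-(m+2)\alpha_1,\ \ \alpha_2=\sqrt{\tfrac{m+1}{m-1}},\ \ \beta_2=m+1-m\alpha_2,$$ $$\mathfrak{T}_X=\mathbf{i}\big(\alpha_1X^{1,0}\cdot\pi_{n-1}+\alpha_2X^{0,1}\cdot\pi_n+\beta_1X^{1,0}\cdot\pi_{n-2}+\beta_2X^{0,1}\cdot\pi_{n+1}\big),$$ $$\mathcal{T}=-\mathbf{i}(m+1)+\mathbf{i}\beta_1\pi_{n-1}+\mathbf{i}\beta_2\pi_n.$$ Then for every vector field $X$ the endomorphism $\mathfrak{T}_X+\gamma(X)\mathcal{T}$ of $S^cM$ is selfadjoint, and for any orthonormal frame $e_1,\dots,e_{2m}$, $$\mathcal{T}':=\sum_{j=1}^{2m}e_j\cdot\mathfrak{T}_{e_j}=\mathcal{T}\circ\mathrm{pr}_{\mathcal{V}}-\mathbf{i}\beta_1(m+4)\pi_{n-2}-\mathbf{i}\beta_2(m+2)\pi_{n+1}.$$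
   Context: $\Omega=g(\cdot,J\cdot)$; Clifford multiplication is $\gamma$ or $\cdot$; $S^cM=S_0\oplus\cdots\oplus S_m$ with $S_j$ the eigenbundle of $\gamma(\Omega)$ for eigenvalue $\mathbf{i}(m-2j)$ and orthogonal projections $\pi_j$ ($\pi_j=0$ if $j\notin\{0,\dots,m\}$). $X^{1,0}=\frac12(X-\mathbf{i}JX)$, $X^{0,1}=\frac12(X+\mathbf{i}JX)$. $\mathcal{V}=S_{n-1}\oplus S_n$ and $\mathrm{pr}_{\mathcal{V}}=\pi_{n-1}+\pi_n$. *)

theory Defs
  imports "HOL-Analysis.Analysis"
begin

text \<open>Pointwise (fibrewise) model. Tangent space at a point: a Euclidean space 'a
  (inner product = g), of real dimension 2m. Spinor fibre: complex^'s with its standard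
  Hermitian product (an orthonormal frame of the fibre), of complex dimension 2^m.\<close>

definition cmat_adj :: "complex^'s^'s \<Rightarrow> complex^'s^'s" where
  "cmat_adj A = (\<chi> i j. cnj (A $ j $ i))"

definition cmat_smult :: "complex \<Rightarrow> complex^'s^'s \<Rightarrow> complex^'s^'s" (infixr "*c" 75) where
  "c *c A = (\<chi> i j. c * A $ i $ j)"

definition selfadjoint :: "complex^'s^'s \<Rightarrow> bool" where
  "selfadjoint A \<longleftrightarrow> cmat_adj A = A"

definition almost_hermitian :: "('a::euclidean_space \<Rightarrow> 'a) \<Rightarrow> bool" where
  "almost_hermitian J \<longleftrightarrow> linear J \<and> (\<forall>x. J (J x) = - x) \<and> (\<forall>x y. inner (J x) (J y) = inner x y)"

definition clifford_mult :: "('a::euclidean_space \<Rightarrow> complex^'s^'s) \<Rightarrow> bool" where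
  "clifford_mult gam \<longleftrightarrow>
     (\<forall>x y. gam (x + y) = gam x + gam y) \<and>
     (\<forall>r x. gam (r *\<^sub>R x) = complex_of_real r *c gam x) \<and>
     (\<forall>x. gam x ** gam x = - (complex_of_real ((norm x)\<^sup>2) *c mat 1)) \<and>
     (\<forall>x. cmat_adj (gam x) = - gam x)"

text \<open>Fundamental 2-form and its Clifford action
  gamma(Omega) = sum_{j<k} Omega(e_j,e_k) e_j . e_k  (written as half of the double sum).\<close>
definition Omega :: "('a::euclidean_space \<Rightarrow> 'a) \<Rightarrow> 'a \<Rightarrow> 'a \<Rightarrow> real" where
  "Omega J x y = inner x (J y)"

definition gamma_Omega :: "('a::euclidean_space \<Rightarrow> complex^'s^'s) \<Rightarrow> ('a \<Rightarrow> 'a) \<Rightarrow> complex^'s^'s" where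
  "gamma_Omega gam J = (1/2) *c (\<Sum>b\<in>Basis. \<Sum>c\<in>Basis. complex_of_real (Omega J b c) *c (gam b ** gam c))"

definition eig_proj :: "complex^'s^'s \<Rightarrow> complex \<Rightarrow> complex^'s^'s" where
  "eig_proj A lam = (THE P. P ** P = P \<and> cmat_adj P = P \<and>
                       {v. P *v v = v} = {v. A *v v = lam *s v})"

definition spin_pi :: "('a::euclidean_space \<Rightarrow> complex^'s^'s) \<Rightarrow> ('a \<Rightarrow> 'a) \<Rightarrow> nat \<Rightarrow> int \<Rightarrow> complex^'s^'s" where
  "spin_pi gam J m j = (if 0 \<le> j \<and> j \<le> int m
      then eig_proj (gamma_Omega gam J) (\<i> * of_int (int m - 2 * j)) else 0)"

text \<open>Clifford action of X^{1,0} and X^{0,1} (complex-linear extension).\<close>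
definition gam10 :: "('a::euclidean_space \<Rightarrow> complex^'s^'s) \<Rightarrow> ('a \<Rightarrow> 'a) \<Rightarrow> 'a \<Rightarrow> complex^'s^'s" where
  "gam10 gam J X = (1/2) *c (gam X - \<i> *c gam (J X))"

definition gam01 :: "('a::euclidean_space \<Rightarrow> complex^'s^'s) \<Rightarrow> ('a \<Rightarrow> 'a) \<Rightarrow> 'a \<Rightarrow> complex^'s^'s" where
  "gam01 gam J X = (1/2) *c (gam X + \<i> *c gam (J X))"

definition alpha1 :: "nat \<Rightarrow> real" where "alpha1 m = sqrt ((real m - 1) / (real m + 1))"
definition beta1  :: "nat \<Rightarrow> real" where "beta1 m = real m + 1 - (real m + 2) * alpha1 m"
definition alpha2 :: "nat \<Rightarrow> real" where "alpha2 m = sqrt ((real m + 1) / (real m - 1))"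
definition beta2  :: "nat \<Rightarrow> real" where "beta2 m = real m + 1 - real m * alpha2 m"

definition frakT :: "('a::euclidean_space \<Rightarrow> complex^'s^'s) \<Rightarrow> ('a \<Rightarrow> 'a) \<Rightarrow> nat \<Rightarrow> 'a \<Rightarrow> complex^'s^'s" where
  "frakT gam J n X = (let m = 2 * n; p = spin_pi gam J m in
     \<i> *c (complex_of_real (alpha1 m) *c (gam10 gam J X ** p (int n - 1))
        + complex_of_real (alpha2 m) *c (gam01 gam J X ** p (int n))
        + complex_of_real (beta1 m) *c (gam10 gam J X ** p (int n - 2))
        + complex_of_real (beta2 m) *c (gam01 gam J X ** p (int n + 1))))"

definition calT :: "('a::euclidean_space \<Rightarrow> complex^'s^'s) \<Rightarrow> ('a \<Rightarrow> 'a) \<Rightarrow> nat \<Rightarrow> complex^'s^'s" where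
  "calT gam J n = (let m = 2 * n; p = spin_pi gam J m in
     (- \<i> * of_nat (m + 1)) *c mat 1
     + (\<i> * complex_of_real (beta1 m)) *c p (int n - 1)
     + (\<i> * complex_of_real (beta2 m)) *c p (int n))"

definition prV :: "('a::euclidean_space \<Rightarrow> complex^'s^'s) \<Rightarrow> ('a \<Rightarrow> 'a) \<Rightarrow> nat \<Rightarrow> complex^'s^'s" where
  "prV gam J n = spin_pi gam J (2 * n) (int n - 1) + spin_pi gam J (2 * n) (int n)"

end

theory Submission
  imports Defs
begin


lemma cs_nth[simp]: "(c *c A) $ i $ j = c * A $ i $ j"
  by (simp add: cmat_smult_def)
lemma adj_nth[simp]: "cmat_adj A $ i $ j = cnj (A $ j $ i)"
  by (simp add: cmat_adj_def)
lemma mat_nth: "(mat c :: 'b::zero^'n^'n) $ i $ j = (if i = j then c else 0)"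
  by (simp add: mat_def)

lemma cs_mult_left: "(c *c A) ** B = c *c (A ** B)"
  by (simp add: vec_eq_iff matrix_matrix_mult_def sum_distrib_left mult.assoc)
lemma cs_mult_right: "A ** (c *c B) = c *c (A ** B)"
  by (simp add: vec_eq_iff matrix_matrix_mult_def sum_distrib_left ac_simps)
lemma cs_add: "c *c (A + B) = c *c A + c *c B"
  by (simp add: vec_eq_iff algebra_simps)
lemma cs_diff: "c *c (A - B) = c *c A - c *c B"
  by (simp add: vec_eq_iff algebra_simps)
lemma cs_minus: "c *c (- A) = - (c *c A)"
  by (simp add: vec_eq_iff)
lemma cs_cs: "c *c (d *c A) = (c * d) *c A"
  by (simp add: vec_eq_iff)
lemma cs_one[simp]: "1 *c A = A"
  by (simp add: vec_eq_iff)
lemma cs_zero_left[simp]: "0 *c A = 0"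
  by (simp add: vec_eq_iff)
lemma cs_zero[simp]: "c *c 0 = 0"
  by (simp add: vec_eq_iff)
lemma cs_sum: "c *c (\<Sum>x\<in>S. f x) = (\<Sum>x\<in>S. c *c f x)"
  by (induct S rule: infinite_finite_induct) (auto simp: cs_add)
lemma mult_add_left: "(A + B) ** C = A ** C + B ** C"
  by (simp add: vec_eq_iff matrix_matrix_mult_def algebra_simps sum.distrib)
lemma mult_sum_left: "(\<Sum>x\<in>S. f x) ** B = (\<Sum>x\<in>S. f x ** B)"
  by (induct S rule: infinite_finite_induct) (auto simp: mult_add_left)
lemma mult_sum_right: "B ** (\<Sum>x\<in>S. f x) = (\<Sum>x\<in>S. B ** f x)"
  by (induct S rule: infinite_finite_induct) (auto simp: matrix_add_ldistrib)
lemma mult_diff_left: "(A - B) ** (C::'b::ring_1^'n^'n) = A ** C - B ** C"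
  by (simp add: vec_eq_iff matrix_matrix_mult_def algebra_simps sum_subtractf)
lemma mult_diff_right: "C ** (A - B) = C ** A - C ** (B::'b::ring_1^'n^'n)"
  by (simp add: vec_eq_iff matrix_matrix_mult_def algebra_simps sum_subtractf)
lemma mult_minus_left: "(- A) ** (C::'b::ring_1^'n^'n) = - (A ** C)"
  by (simp add: vec_eq_iff matrix_matrix_mult_def sum_negf)
lemma mult_minus_right: "C ** (- A) = - (C ** (A::'b::ring_1^'n^'n))"
  by (simp add: vec_eq_iff matrix_matrix_mult_def sum_negf)

lemma adj_add: "cmat_adj (A + B) = cmat_adj A + cmat_adj B"
  by (simp add: vec_eq_iff)
lemma adj_diff: "cmat_adj (A - B) = cmat_adj A - cmat_adj B"
  by (simp add: vec_eq_iff)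
lemma adj_minus: "cmat_adj (- A) = - cmat_adj A"
  by (simp add: vec_eq_iff)
lemma adj_cs: "cmat_adj (c *c A) = cnj c *c cmat_adj A"
  by (simp add: vec_eq_iff)
lemma adj_adj[simp]: "cmat_adj (cmat_adj A) = A"
  by (simp add: vec_eq_iff)
lemma adj_zero[simp]: "cmat_adj 0 = 0"
  by (simp add: vec_eq_iff)
lemma adj_mat[simp]: "cmat_adj (mat c) = mat (cnj c)"
  by (simp add: vec_eq_iff mat_def)
lemma adj_mult: "cmat_adj (A ** B) = cmat_adj B ** cmat_adj A"
  by (simp add: vec_eq_iff matrix_matrix_mult_def mult.commute)
lemma adj_sum: "cmat_adj (\<Sum>x\<in>S. f x) = (\<Sum>x\<in>S. cmat_adj (f x))"
  by (induct S rule: infinite_finite_induct) (auto simp: adj_add)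

lemma cs_mat: "c *c A = mat c ** A"
  by (simp add: vec_eq_iff matrix_matrix_mult_def mat_def if_distrib if_distribR sum.delta cong: if_cong)

lemma cs_mat1: "c *c mat 1 = mat c"
  by (simp add: vec_eq_iff mat_def)

lemma cs_addc: "(c + d) *c A = c *c A + d *c A"
  by (simp add: vec_eq_iff algebra_simps)

lemma cs_mv: "(c *c A) *v v = c *s (A *v v)"
  by (simp add: vec_eq_iff matrix_vector_mult_def sum_distrib_left mult.assoc)

lemma mv_cs: "(A::complex^'n^'m) *v (c *s v) = c *s (A *v v)"
  by (auto simp: vec_eq_iff matrix_vector_mult_def sum_distrib_left mult.left_commute intro!: sum.cong)

definition hp :: "complex^'s \<Rightarrow> complex^'s \<Rightarrow> complex" where
  "hp u v = (\<Sum>i\<in>UNIV. u $ i * cnj (v $ i))"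

lemma hp_adj: "hp (A *v u) v = hp u (cmat_adj A *v v)"
proof -
  have "hp (A *v u) v = (\<Sum>i\<in>UNIV. \<Sum>j\<in>UNIV. A $ i $ j * u $ j * cnj (v $ i))"
    unfolding hp_def matrix_vector_mult_def by (simp add: sum_distrib_right)
  also have "\<dots> = (\<Sum>j\<in>UNIV. \<Sum>i\<in>UNIV. A $ i $ j * u $ j * cnj (v $ i))"
    by (rule sum.swap)
  also have "\<dots> = hp u (cmat_adj A *v v)"
    unfolding hp_def matrix_vector_mult_def by (simp add: sum_distrib_left ac_simps)
  finally show ?thesis .
qed

lemma hp_add_left: "hp (u + w) v = hp u v + hp w v"
  by (simp add: hp_def algebra_simps sum.distrib)
lemma hp_diff_left: "hp (u - w) v = hp u v - hp w v"
  by (simp add: hp_def algebra_simps sum_subtractf)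
lemma hp_diff_right: "hp v (u - w) = hp v u - hp v w"
  by (simp add: hp_def algebra_simps sum_subtractf)
lemma hp_smult_left: "hp (c *s u) v = c * hp u v"
  by (simp add: hp_def sum_distrib_left mult.assoc)
lemma hp_smult_right: "hp u (c *s v) = cnj c * hp u v"
  by (simp add: hp_def sum_distrib_left ac_simps)
lemma hp_sum_left: "hp (\<Sum>x\<in>S. f x) v = (\<Sum>x\<in>S. hp (f x) v)"
proof (induct S rule: infinite_finite_induct)
  case (infinite A) then show ?case by (simp add: hp_def)
next
  case empty then show ?case by (simp add: hp_def)
next
  case (insert x F) then show ?case by (simp add: hp_add_left)
qed

lemma hp_self: "hp v v = complex_of_real (\<Sum>i\<in>UNIV. (cmod (v $ i))\<^sup>2)"
  by (simp add: hp_def complex_norm_square[symmetric])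

lemma hp_self_nonneg: "0 \<le> Re (hp v v)" "Im (hp v v) = 0"
  by (simp_all add: hp_self sum_nonneg)

lemma hp_self_zero: "hp v v = 0 \<Longrightarrow> v = 0"
proof -
  assume "hp v v = 0"
  then have "(\<Sum>i\<in>UNIV. (cmod (v $ i))\<^sup>2) = 0" unfolding hp_self of_real_eq_0_iff .
  then have "\<forall>i\<in>UNIV. (cmod (v $ i))\<^sup>2 = 0" by (subst sum_nonneg_eq_0_iff[symmetric]) auto
  then show "v = 0" by (simp add: vec_eq_iff)
qed

lemma matrix_eq_hp: "(\<And>u v. hp (A *v u) v = hp (B *v u) v) \<Longrightarrow> A = B"
proof -
  assume h: "\<And>u v. hp (A *v u) v = hp (B *v u) v"
  have "\<forall>u. A *v u = B *v u"
  proof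
    fix u
    have "hp (A *v u - B *v u) (A *v u - B *v u) = 0"
      using h[of u "A *v u - B *v u"]
      by (simp add: hp_diff_left)
    then show "A *v u = B *v u" using hp_self_zero[of "A *v u - B *v u"] by simp
  qed
  then show ?thesis by (simp add: matrix_eq)
qed




lemma hp_cnj: "hp u v = cnj (hp v u)"
  by (simp add: hp_def mult.commute)
lemma hp_add_right: "hp v (u + w) = hp v u + hp v w"
  by (simp add: hp_def algebra_simps sum.distrib)
lemma hp_zero_left[simp]: "hp 0 v = 0"
  by (simp add: hp_def)
lemma hp_zero_right[simp]: "hp v 0 = 0"
  by (simp add: hp_def)

lemma inner_hp: "inner (z::complex^'s) w = Re (hp z w)"
  by (simp add: inner_vec_def hp_def inner_complex_def Re_sum)

lemma proj_unique:
  fixes P Q :: "complex^'s^'s"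
  assumes "P ** P = P" "cmat_adj P = P" "Q ** Q = Q" "cmat_adj Q = Q"
    and "{v. P *v v = v} = {v. Q *v v = v}"
  shows "P = Q"
proof -
  have PQ: "P ** Q = Q"
  proof (subst matrix_eq, intro allI)
    fix v
    have "Q *v (Q *v v) = Q *v v" using assms(3) by (simp add: matrix_vector_mul_assoc)
    then have "Q *v v \<in> {v. P *v v = v}" using assms(5) by simp
    then show "(P ** Q) *v v = Q *v v" by (simp add: matrix_vector_mul_assoc[symmetric])
  qed
  have QP: "Q ** P = P"
  proof (subst matrix_eq, intro allI)
    fix v
    have "P *v (P *v v) = P *v v" using assms(1) by (simp add: matrix_vector_mul_assoc)
    then have "P *v v \<in> {v. Q *v v = v}" using assms(5)[symmetric] by simp
    then show "(Q ** P) *v v = P *v v" by (simp add: matrix_vector_mul_assoc[symmetric])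
  qed
  have "Q = cmat_adj (P ** Q)" using PQ assms(4) by simp
  also have "\<dots> = Q ** P" using assms(2,4) by (simp add: adj_mult)
  finally show ?thesis using QP by simp
qed

lemma proj_exists:
  fixes S :: "(complex^'s) set"
  assumes sub: "subspace S" and cl: "\<And>c v. v \<in> S \<Longrightarrow> c *s v \<in> S"
  shows "\<exists>P. P ** P = P \<and> cmat_adj P = P \<and> {v. P *v v = v} = S"
proof -
  define R where "R x y \<longleftrightarrow> y \<in> S \<and> (\<forall>w\<in>S. hp (x - y) w = 0)" for x y
  have ex: "\<exists>y. R x y" for x
  proof -
    obtain y z where y: "y \<in> span S" and z: "\<And>w. w \<in> span S \<Longrightarrow> orthogonal z w" and xyz: "x = y + z"
      using orthogonal_subspace_decomp_exists by blast
    have yS: "y \<in> S" using y sub by (metis span_eq_iff)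
    have "hp z w = 0" if w: "w \<in> S" for w
    proof -
      have "\<i> *s w \<in> S" using cl w by blast
      then have "Re (hp z (\<i> *s w)) = 0" "Re (hp z w) = 0"
        using z w by (auto simp: orthogonal_def inner_hp span_base)
      then have "Im (hp z w) = 0" "Re (hp z w) = 0" by (auto simp: hp_smult_right)
      then show ?thesis by (simp add: complex_eq_iff)
    qed
    then have "R x y" using yS xyz by (simp add: R_def)
    then show ?thesis by blast
  qed
  have uniq: "y = y'" if "R x y" "R x y'" for x y y'
  proof -
    have "y - y' \<in> S" using that sub by (simp add: R_def subspace_diff)
    then have "hp (x - y') (y - y') - hp (x - y) (y - y') = 0" using that by (simp add: R_def)
    then have "hp (y - y') (y - y') = 0" by (simp add: hp_diff_left[symmetric] algebra_simps)
    then show ?thesis using hp_self_zero[of "y - y'"] by simp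
  qed
  define p where "p x = (SOME y. R x y)" for x
  have pR: "R x (p x)" for x unfolding p_def using ex someI_ex by metis
  have pchar: "R x y \<Longrightarrow> p x = y" for x y using pR uniq by blast
  have padd: "p (x + x') = p x + p x'" for x x'
  proof (rule pchar)
    have e: "x + x' - (p x + p x') = (x - p x) + (x' - p x')" by (simp add: algebra_simps)
    show "R (x + x') (p x + p x')"
      using pR[of x] pR[of x'] sub unfolding R_def e
      by (auto simp: subspace_add hp_add_left)
  qed
  have psc: "p (c *s x) = c *s p x" for c x
  proof (rule pchar)
    show "R (c *s x) (c *s p x)"
      unfolding R_def
    proof (intro conjI ballI)
      show "c *s p x \<in> S" using cl pR[of x] by (simp add: R_def)
      fix w assume w: "w \<in> S"
      have "hp (c *s x - c *s p x) w = c * hp (x - p x) w"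
        by (simp add: hp_diff_left hp_smult_left right_diff_distrib)
      then show "hp (c *s x - c *s p x) w = 0" using pR[of x] w by (simp add: R_def)
    qed
  qed
  have p0: "p 0 = 0" using psc[of 0 0] by simp
  have psum: "p (\<Sum>j\<in>F. f j) = (\<Sum>j\<in>F. p (f j))" if "finite F" for F and f :: "'s \<Rightarrow> complex^'s"
    using that by (induct F rule: finite_induct) (auto simp: p0 padd)
  define P where "P = (\<chi> i j. p (axis j 1) $ i)"
  have Pv: "P *v x = p x" for x
  proof -
    have "p x = p (\<Sum>j\<in>UNIV. x $ j *s axis j 1)" by (simp add: basis_expansion)
    also have "\<dots> = (\<Sum>j\<in>UNIV. x $ j *s p (axis j 1))" by (simp add: psum psc)
    finally show ?thesis
      by (simp add: P_def matrix_vector_mult_def vec_eq_iff sum_component mult.commute)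
  qed
  have pS: "p x \<in> S" for x using pR by (simp add: R_def)
  have pid: "x \<in> S \<Longrightarrow> p x = x" for x by (rule pchar) (simp add: R_def)
  have PP: "P ** P = P"
    by (simp add: matrix_eq matrix_vector_mul_assoc[symmetric] Pv pid pS)
  have fixP: "{v. P *v v = v} = S"
    using pS pid by (auto simp: Pv) (metis)
  have orth: "hp (x - p x) (p u) = 0" for x u using pR[of x] pS[of u] by (simp add: R_def)
  have sa: "hp (p v) u = hp v (p u)" for u v
  proof -
    have "hp (p v) u = hp (p v) (p u) + hp (p v) (u - p u)"
      by (simp add: hp_add_right[symmetric])
    also have "hp (p v) (u - p u) = 0" using orth[of u v] by (subst hp_cnj) simp
    also have "hp v (p u) = hp (p v) (p u) + hp (v - p v) (p u)"
      by (simp add: hp_add_left[symmetric])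
    ultimately show ?thesis using orth[of v u] by simp
  qed
  have adjP: "cmat_adj P = P"
  proof (rule matrix_eq_hp)
    fix u v
    have "hp (cmat_adj P *v u) v = cnj (hp v (cmat_adj P *v u))" by (rule hp_cnj)
    also have "\<dots> = cnj (hp (P *v v) u)" by (simp add: hp_adj)
    also have "\<dots> = cnj (hp v (P *v u))" by (simp add: Pv sa)
    also have "\<dots> = hp (P *v u) v" by (simp add: hp_cnj[of v])
    finally show "hp (cmat_adj P *v u) v = hp (P *v u) v" .
  qed
  show ?thesis using PP adjP fixP by blast
qed

lemma eig_proj_char:
  fixes A :: "complex^'s^'s"
  shows "eig_proj A lam ** eig_proj A lam = eig_proj A lam \<and> cmat_adj (eig_proj A lam) = eig_proj A lam
     \<and> {v. eig_proj A lam *v v = v} = {v. A *v v = lam *s v}"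
proof -
  have sR: "c *\<^sub>R (v::complex^'s) = complex_of_real c *s v" for c v
    by (simp add: vec_eq_iff) (simp add: scaleR_conv_of_real)
  have sub: "subspace {v. A *v v = lam *s v}"
    unfolding subspace_def
    by (auto simp: sR mv_cs matrix_vector_right_distrib vec_eq_iff algebra_simps)
  have cl: "c *s v \<in> {v. A *v v = lam *s v}" if "v \<in> {v. A *v v = lam *s v}" for c v
    using that by (simp add: mv_cs vec_eq_iff mult.left_commute)
  obtain P where P: "P ** P = P \<and> cmat_adj P = P \<and> {v. P *v v = v} = {v. A *v v = lam *s v}"
    using proj_exists[OF sub cl] by blast
  show ?thesis unfolding eig_proj_def
  proof (rule theI[where a=P])
    show "P ** P = P \<and> cmat_adj P = P \<and> {v. P *v v = v} = {v. A *v v = lam *s v}" by (rule P)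
  next
    fix Q assume Q: "Q ** Q = Q \<and> cmat_adj Q = Q \<and> {v. Q *v v = v} = {v. A *v v = lam *s v}"
    show "Q = P" using proj_unique[of Q P] P Q by auto
  qed
qed




locale cliff =
  fixes gam :: "'a::euclidean_space \<Rightarrow> complex^'s^'s" and J :: "'a \<Rightarrow> 'a"
  assumes C: "clifford_mult gam" and AH: "almost_hermitian J"
begin

abbreviation "Om \<equiv> gamma_Omega gam J"

lemma g_add: "gam (x + y) = gam x + gam y" using C by (simp add: clifford_mult_def)
lemma g_scale: "gam (r *\<^sub>R x) = complex_of_real r *c gam x" using C by (simp add: clifford_mult_def)
lemma g_sq: "gam x ** gam x = - (complex_of_real ((norm x)\<^sup>2) *c mat 1)" using C by (simp add: clifford_mult_def)
lemma g_adj: "cmat_adj (gam x) = - gam x" using C by (simp add: clifford_mult_def)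
lemma g_zero[simp]: "gam 0 = 0" using g_scale[of 0 0] by (simp add: vec_eq_iff)
lemma g_minus: "gam (- x) = - gam x" using g_scale[of "-1" x] by (simp add: vec_eq_iff)
lemma g_diff: "gam (x - y) = gam x - gam y" using g_add[of x "-y"] by (simp add: g_minus)
lemma g_sum: "gam (\<Sum>i\<in>S. f i) = (\<Sum>i\<in>S. gam (f i))"
  by (induct S rule: infinite_finite_induct) (auto simp: g_add)
lemma g_lin: "(\<Sum>i\<in>S. complex_of_real (f i) *c gam (v i)) = gam (\<Sum>i\<in>S. f i *\<^sub>R v i)"
  by (simp add: g_sum g_scale)

lemma J_lin: "linear J" using AH by (simp add: almost_hermitian_def)
lemma JJ[simp]: "J (J x) = - x" using AH by (simp add: almost_hermitian_def)
lemma J_inner[simp]: "inner (J x) (J y) = inner x y" using AH by (simp add: almost_hermitian_def)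
lemma J_add: "J (x + y) = J x + J y" using J_lin by (rule linear_add)
lemma J_scale: "J (r *\<^sub>R x) = r *\<^sub>R J x" using J_lin by (rule linear_scale)
lemma J_sum: "J (\<Sum>i\<in>S. f i) = (\<Sum>i\<in>S. J (f i))" using linear_sum[OF J_lin] by (simp add: o_def)
lemma J_skew: "inner x (J y) = - inner (J x) y"
proof -
  have "inner x (J y) = inner (J x) (J (J y))" by (rule J_inner[symmetric])
  also have "\<dots> = - inner (J x) y" by simp
  finally show ?thesis .
qed
lemma J_self[simp]: "inner x (J x) = 0"
  using J_skew[of x x] by (simp add: inner_commute)
lemma J_norm[simp]: "norm (J x) = norm x"
  by (simp add: norm_eq_sqrt_inner)

lemma anti: "gam x ** gam y + gam y ** gam x = (- 2 * complex_of_real (inner x y)) *c mat 1"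
proof -
  have "gam (x + y) ** gam (x + y) = gam x ** gam x + gam x ** gam y + gam y ** gam x + gam y ** gam y"
    by (simp add: g_add matrix_add_ldistrib mult_add_left algebra_simps)
  moreover have "(norm (x + y))\<^sup>2 = (norm x)\<^sup>2 + 2 * inner x y + (norm y)\<^sup>2"
    by (simp add: power2_norm_eq_inner algebra_simps inner_commute)
  ultimately show ?thesis unfolding g_sq
    by (simp add: vec_eq_iff algebra_simps mat_def)
qed

lemma anti': "gam y ** gam x = - (gam x ** gam y) + (- 2 * complex_of_real (inner x y)) *c mat 1"
  using anti[of x y] by (simp add: algebra_simps)

lemma g_expand: "gam x = (\<Sum>b\<in>Basis. complex_of_real (inner x b) *c gam b)"
  by (simp add: g_lin euclidean_representation)

lemma OmS: "Om = (1/2) *c (\<Sum>c\<in>Basis. gam (J c) ** gam c)"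
proof -
  have "(\<Sum>b\<in>Basis. \<Sum>c\<in>Basis. complex_of_real (Omega J b c) *c (gam b ** gam c))
      = (\<Sum>c\<in>Basis. \<Sum>b\<in>Basis. complex_of_real (Omega J b c) *c (gam b ** gam c))"
    by (rule sum.swap)
  also have "\<dots> = (\<Sum>c\<in>Basis. (\<Sum>b\<in>Basis. complex_of_real (inner (J c) b) *c gam b) ** gam c)"
    by (simp add: mult_sum_left cs_mult_left Omega_def inner_commute)
  also have "\<dots> = (\<Sum>c\<in>Basis. gam (J c) ** gam c)"
    by (simp add: g_expand[symmetric])
  finally show ?thesis by (simp add: gamma_Omega_def)
qed

lemma sum_const_cs: "(\<Sum>c\<in>S. A) = of_nat (card S) *c A"
  apply (simp only: vec_eq_iff sum_component cs_nth)
  apply simp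
  done

lemma sum_gg: "(\<Sum>c\<in>Basis. gam c ** gam c) = - (of_nat DIM('a) *c mat 1)"
proof -
  have "(\<Sum>c\<in>Basis. gam c ** gam c) = (\<Sum>c\<in>(Basis::'a set). - mat 1)"
    by (rule sum.cong) (auto simp: g_sq)
  then show ?thesis by (simp only: sum_const_cs sum_negf cs_minus)
qed

lemma sum_gJgJ: "(\<Sum>c\<in>Basis. gam (J c) ** gam (J c)) = - (of_nat DIM('a) *c mat 1)"
proof -
  have "(\<Sum>c\<in>Basis. gam (J c) ** gam (J c)) = (\<Sum>c\<in>(Basis::'a set). - mat 1)"
    by (rule sum.cong) (auto simp: g_sq)
  then show ?thesis by (simp only: sum_const_cs sum_negf cs_minus)
qed

lemma sum_gJg: "(\<Sum>c\<in>Basis. gam (J c) ** gam c) = 2 *c Om"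
  by (simp add: OmS cs_cs)

lemma sum_ggJ: "(\<Sum>c\<in>Basis. gam c ** gam (J c)) = - (2 *c Om)"
proof -
  have "(\<Sum>c\<in>Basis. gam c ** gam (J c)) = (\<Sum>c\<in>Basis. - (gam (J c) ** gam c))"
    by (rule sum.cong) (auto simp: anti'[of "J _"] inner_commute)
  then show ?thesis by (simp add: sum_negf sum_gJg)
qed

lemma Om_adj: "cmat_adj Om = - Om"
proof -
  have "cmat_adj Om = (1/2) *c (\<Sum>c\<in>Basis. gam c ** gam (J c))"
    by (simp add: OmS adj_cs adj_sum adj_mult g_adj mult_minus_left mult_minus_right)
  then show ?thesis by (simp add: sum_ggJ cs_minus cs_cs)
qed

lemma comm_term: "gam b ** gam c ** gam x - gam x ** (gam b ** gam c)
   = (2 * complex_of_real (inner b x)) *c gam c - (2 * complex_of_real (inner c x)) *c gam b"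
proof -
  have 1: "gam b ** gam c ** gam x = gam b ** (gam c ** gam x)" by (simp only: matrix_mul_assoc)
  have 2: "gam c ** gam x = - (gam x ** gam c) + (- 2 * complex_of_real (inner x c)) *c mat 1" by (rule anti')
  have 3: "gam b ** gam x = - (gam x ** gam b) + (- 2 * complex_of_real (inner x b)) *c mat 1" by (rule anti')
  have s2: "gam b ** gam c ** gam x = - ((gam b ** gam x) ** gam c) + (- 2 * complex_of_real (inner x c)) *c gam b"
    unfolding 1 2 by (simp only: matrix_add_ldistrib mult_minus_right cs_mult_right matrix_mul_rid matrix_mul_assoc)
  have s3: "(gam b ** gam x) ** gam c = - (gam x ** gam b ** gam c) + (- 2 * complex_of_real (inner x b)) *c gam c"
    unfolding 3 by (simp only: mult_add_left mult_minus_left cs_mult_left matrix_mul_lid matrix_mul_assoc)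
  show ?thesis unfolding s2 s3 matrix_mul_assoc
    by (simp add: vec_eq_iff inner_commute algebra_simps)
qed

lemma comm: "Om ** gam x - gam x ** Om = (-2) *c gam (J x)"
proof -
  have "(\<Sum>c\<in>Basis. gam (J c) ** gam c) ** gam x - gam x ** (\<Sum>c\<in>Basis. gam (J c) ** gam c)
      = (\<Sum>c\<in>Basis. gam (J c) ** gam c ** gam x - gam x ** (gam (J c) ** gam c))"
    by (simp add: mult_sum_left mult_sum_right sum_subtractf)
  also have "\<dots> = (\<Sum>c\<in>Basis. complex_of_real (2 * inner (J c) x) *c gam c)
                  - (\<Sum>c\<in>Basis. complex_of_real (2 * inner c x) *c gam (J c))"
    by (simp add: comm_term sum_subtractf)
  also have "\<dots> = gam (\<Sum>c\<in>Basis. (2 * inner (J c) x) *\<^sub>R c) - gam (\<Sum>c\<in>Basis. (2 * inner c x) *\<^sub>R J c)"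
    by (simp only: g_lin)
  also have "(\<Sum>c\<in>Basis. (2 * inner (J c) x) *\<^sub>R c) = - 2 *\<^sub>R J x"
  proof -
    have "(\<Sum>c\<in>Basis. (2 * inner (J c) x) *\<^sub>R c) = (\<Sum>c\<in>Basis. (-2) *\<^sub>R (inner (J x) c *\<^sub>R c))"
      by (rule sum.cong) (auto simp: inner_commute[of "J _"] J_skew[of x])
    also have "\<dots> = (-2) *\<^sub>R (\<Sum>c\<in>Basis. inner (J x) c *\<^sub>R c)" by (simp only: scaleR_sum_right)
    also have "\<dots> = (-2) *\<^sub>R J x" by (simp only: euclidean_representation)
    finally show ?thesis by simp
  qed
  also have "(\<Sum>c\<in>Basis. (2 * inner c x) *\<^sub>R J c) = 2 *\<^sub>R J x"
  proof -
    have "(\<Sum>c\<in>Basis. (2 * inner c x) *\<^sub>R J c) = 2 *\<^sub>R J (\<Sum>c\<in>Basis. inner x c *\<^sub>R c)"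
      by (simp add: J_sum J_scale scaleR_sum_right inner_commute)
    then show ?thesis by (simp add: euclidean_representation)
  qed
  finally have *: "(\<Sum>c\<in>Basis. gam (J c) ** gam c) ** gam x - gam x ** (\<Sum>c\<in>Basis. gam (J c) ** gam c)
      = (-4) *c gam (J x)"
    by (simp add: g_scale vec_eq_iff g_minus)
  have "Om ** gam x - gam x ** Om = (1/2) *c ((\<Sum>c\<in>Basis. gam (J c) ** gam c) ** gam x - gam x ** (\<Sum>c\<in>Basis. gam (J c) ** gam c))"
    by (simp only: OmS cs_mult_left cs_mult_right cs_diff)
  also have "\<dots> = (1/2) *c ((-4) *c gam (J x))" by (subst *) (rule refl)
  also have "\<dots> = (-2) *c gam (J x)" by (simp only: cs_cs) simp
  finally show ?thesis .
qed

end



lemma parseval_frame: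
  fixes e :: "nat \<Rightarrow> 'a::euclidean_space"
  assumes on: "\<forall>i<DIM('a). \<forall>j<DIM('a). inner (e i) (e j) = (if i = j then 1 else 0)"
  shows "(\<Sum>j<DIM('a). inner (e j) x * inner (e j) y) = inner x y"
proof -
  let ?D = "DIM('a)"
  let ?E = "e ` {..<?D}"
  have inj: "inj_on e {..<?D}"
  proof (rule inj_onI)
    fix i j assume i: "i \<in> {..<?D}" and j: "j \<in> {..<?D}" and eq: "e i = e j"
    show "i = j"
    proof (rule ccontr)
      assume "i \<noteq> j"
      then have "inner (e i) (e j) = 0" using on i j by auto
      moreover have "inner (e i) (e i) = 1" using on i by auto
      ultimately show False using eq by simp
    qed
  qed
  have card: "card ?E = ?D" using inj by (simp add: card_image)
  have po: "pairwise orthogonal ?E"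
    unfolding pairwise_def orthogonal_def using on by auto
  have n0: "0 \<notin> ?E"
  proof
    assume "0 \<in> ?E"
    then obtain i where "i < ?D" "e i = 0" by auto
    then show False using on by force
  qed
  have ind: "independent ?E" by (rule pairwise_orthogonal_independent[OF po n0])
  have "dim ?E = ?D" using dim_span_eq_card_independent[OF ind] card by simp
  then have sp: "span ?E = UNIV" using dim_eq_full by metis
  have coef: "inner (\<Sum>j<?D. c j *\<^sub>R e j) (e k) = c k" if "k < ?D" for c k
  proof -
    have "inner (\<Sum>j<?D. c j *\<^sub>R e j) (e k) = (\<Sum>j<?D. c j * inner (e j) (e k))"
      by (simp add: inner_sum_left)
    also have "\<dots> = (\<Sum>j<?D. if j = k then c k else 0)"
      by (rule sum.cong) (use on that in auto)
    also have "\<dots> = c k" using that by simp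
    finally show ?thesis .
  qed
  have rep: "x = (\<Sum>j<?D. inner x (e j) *\<^sub>R e j)" for x
  proof -
    let ?y = "x - (\<Sum>j<?D. inner x (e j) *\<^sub>R e j)"
    have "orthogonal ?y z" if "z \<in> ?E" for z
    proof -
      obtain k where k: "k < ?D" "z = e k" using \<open>z \<in> ?E\<close> by auto
      show ?thesis unfolding orthogonal_def k(2) using coef[OF k(1), of "\<lambda>j. inner x (e j)"]
        by (simp add: inner_diff_left)
    qed
    then have "orthogonal ?y ?y" using orthogonal_to_span[of ?y ?E ?y] sp by auto
    then have "?y = 0" by (simp only: orthogonal_self)
    then show ?thesis by simp
  qed
  have "inner x y = inner (\<Sum>j<?D. inner x (e j) *\<^sub>R e j) y" using rep[of x] by simp
  also have "\<dots> = (\<Sum>j<?D. inner (e j) x * inner (e j) y)"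
    by (simp add: inner_sum_left inner_commute[of x])
  finally show ?thesis by simp
qed

context cliff begin

abbreviation "g10 \<equiv> gam10 gam J"
abbreviation "g01 \<equiv> gam01 gam J"

lemma comm': "Om ** gam y = gam y ** Om + (-2) *c gam (J y)"
  using comm[of y] by (simp add: algebra_simps)

lemma g10_g01: "g10 x + g01 x = gam x"
  by (simp add: gam10_def gam01_def vec_eq_iff algebra_simps)

lemma adj10: "cmat_adj (g10 x) = - g01 x"
  by (simp add: gam10_def gam01_def adj_cs adj_diff g_adj vec_eq_iff algebra_simps)

lemma adj01: "cmat_adj (g01 x) = - g10 x"
  by (simp add: gam10_def gam01_def adj_cs adj_add g_adj vec_eq_iff algebra_simps)

lemma comm10: "Om ** g10 x = g10 x ** Om + (- 2 * \<i>) *c g10 x"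
  unfolding gam10_def
  by (simp only: cs_mult_right cs_mult_left mult_diff_right mult_diff_left comm' JJ g_minus)
     (simp add: vec_eq_iff algebra_simps)

lemma comm01: "Om ** g01 x = g01 x ** Om + (2 * \<i>) *c g01 x"
  unfolding gam01_def
  by (simp only: cs_mult_right cs_mult_left matrix_add_ldistrib mult_add_left comm' JJ g_minus)
     (simp add: vec_eq_iff algebra_simps)

lemma prod1001: "g10 b ** g01 b = (1/4) *c (gam b ** gam b + \<i> *c (gam b ** gam (J b))
     - \<i> *c (gam (J b) ** gam b) + gam (J b) ** gam (J b))"
  unfolding gam10_def gam01_def
  by (simp only: cs_mult_right cs_mult_left matrix_add_ldistrib mult_diff_left cs_cs)
     (simp add: vec_eq_iff algebra_simps)

lemma prod0110: "g01 b ** g10 b = (1/4) *c (gam b ** gam b - \<i> *c (gam b ** gam (J b))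
     + \<i> *c (gam (J b) ** gam b) + gam (J b) ** gam (J b))"
  unfolding gam10_def gam01_def
  by (simp only: cs_mult_right cs_mult_left mult_diff_right mult_add_left cs_cs)
     (simp add: vec_eq_iff algebra_simps)

lemma pos01: assumes "DIM('a) = 2 * m"
  shows "(\<Sum>b\<in>Basis. cmat_adj (g01 b) ** g01 b) = of_nat m *c mat 1 + \<i> *c Om"
proof -
  have "(\<Sum>b\<in>Basis. cmat_adj (g01 b) ** g01 b) = - (\<Sum>b\<in>Basis. g10 b ** g01 b)"
    by (simp add: adj01 mult_minus_left sum_negf)
  also have "(\<Sum>b\<in>Basis. g10 b ** g01 b) = (1/4) *c ((\<Sum>b\<in>Basis. gam b ** gam b)
     + \<i> *c (\<Sum>b\<in>Basis. gam b ** gam (J b)) - \<i> *c (\<Sum>b\<in>Basis. gam (J b) ** gam b)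
     + (\<Sum>b\<in>Basis. gam (J b) ** gam (J b)))"
    by (simp only: prod1001 cs_sum[symmetric] sum.distrib sum_subtractf)
  also have "\<dots> = (1/4) *c (- (of_nat DIM('a) *c mat 1) + \<i> *c (- (2 *c Om)) - \<i> *c (2 *c Om)
     + - (of_nat DIM('a) *c mat 1))"
    by (simp only: sum_gg sum_ggJ sum_gJg sum_gJgJ)
  finally show ?thesis using assms by (simp add: vec_eq_iff algebra_simps)
qed

lemma pos10: assumes "DIM('a) = 2 * m"
  shows "(\<Sum>b\<in>Basis. cmat_adj (g10 b) ** g10 b) = of_nat m *c mat 1 - \<i> *c Om"
proof -
  have "(\<Sum>b\<in>Basis. cmat_adj (g10 b) ** g10 b) = - (\<Sum>b\<in>Basis. g01 b ** g10 b)"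
    by (simp add: adj10 mult_minus_left sum_negf)
  also have "(\<Sum>b\<in>Basis. g01 b ** g10 b) = (1/4) *c ((\<Sum>b\<in>Basis. gam b ** gam b)
     - \<i> *c (\<Sum>b\<in>Basis. gam b ** gam (J b)) + \<i> *c (\<Sum>b\<in>Basis. gam (J b) ** gam b)
     + (\<Sum>b\<in>Basis. gam (J b) ** gam (J b)))"
    by (simp only: prod0110 cs_sum[symmetric] sum.distrib sum_subtractf)
  also have "\<dots> = (1/4) *c (- (of_nat DIM('a) *c mat 1) - \<i> *c (- (2 *c Om)) + \<i> *c (2 *c Om)
     + - (of_nat DIM('a) *c mat 1))"
    by (simp only: sum_gg sum_ggJ sum_gJg sum_gJgJ)
  finally show ?thesis using assms by (simp add: vec_eq_iff algebra_simps)
qed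

lemma hp_minus_left: "hp (- u) v = - hp u v"
  by (simp add: hp_def sum_negf)

lemma mv_sum_left: "(\<Sum>b\<in>S. A b) *v v = (\<Sum>b\<in>S. A b *v v)"
  by (induct S rule: infinite_finite_induct) (auto simp: matrix_vector_mult_add_rdistrib)

lemma pos_hp: "0 \<le> Re (hp ((\<Sum>b\<in>S. cmat_adj (G b) ** G b) *v v) v)"
proof -
  have "hp ((\<Sum>b\<in>S. cmat_adj (G b) ** G b) *v v) v = (\<Sum>b\<in>S. hp (G b *v v) (G b *v v))"
    by (simp add: mv_sum_left hp_sum_left matrix_vector_mul_assoc[symmetric] hp_adj)
  then show ?thesis by (simp add: Re_sum sum_nonneg hp_self_nonneg)
qed

lemma no_eig_top: assumes "DIM('a) = 2 * m" and ev: "Om *v v = (\<i> * of_nat (m + 2)) *s v"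
  shows "v = 0"
proof -
  have "(\<Sum>b\<in>Basis. cmat_adj (g01 b) ** g01 b) *v v = (-2) *s v"
    unfolding pos01[OF assms(1)] using ev
    by (simp add: matrix_vector_mult_add_rdistrib cs_mv vec_eq_iff algebra_simps)
  then have "0 \<le> Re (hp ((-2) *s v) v)" using pos_hp[of g01 Basis v] by simp
  then have "Re (hp v v) \<le> 0" by (simp add: hp_smult_left hp_minus_left)
  then have "Re (hp v v) = 0" using hp_self_nonneg(1)[of v] by simp
  then have "hp v v = 0" using hp_self_nonneg(2)[of v] by (simp add: complex_eq_iff)
  then show ?thesis by (rule hp_self_zero)
qed

lemma no_eig_bot: assumes "DIM('a) = 2 * m" and ev: "Om *v v = (- \<i> * of_nat (m + 2)) *s v"
  shows "v = 0"
proof -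
  have "(\<Sum>b\<in>Basis. cmat_adj (g10 b) ** g10 b) *v v = (-2) *s v"
    unfolding pos10[OF assms(1)] matrix_vector_mult_diff_rdistrib cs_mv ev
    by (simp add: vec_eq_iff algebra_simps)
  then have "0 \<le> Re (hp ((-2) *s v) v)" using pos_hp[of g10 Basis v] by simp
  then have "Re (hp v v) \<le> 0" by (simp add: hp_smult_left hp_minus_left)
  then have "Re (hp v v) = 0" using hp_self_nonneg(1)[of v] by simp
  then have "hp v v = 0" using hp_self_nonneg(2)[of v] by (simp add: complex_eq_iff)
  then show ?thesis by (rule hp_self_zero)
qed

end



locale cliffn = cliff gam J for gam :: "'a::euclidean_space \<Rightarrow> complex^'s^'s" and J +
  fixes n :: nat
  assumes dimn: "DIM('a) = 2 * (2 * n)" and n1: "n \<ge> 1"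
begin

abbreviation "p \<equiv> spin_pi gam J (2 * n)"
definition lam :: "int \<Rightarrow> complex" where "lam k = \<i> * of_int (int (2 * n) - 2 * k)"

lemma p_out: "\<not> (0 \<le> k \<and> k \<le> int (2 * n)) \<Longrightarrow> p k = 0"
  unfolding spin_pi_def by (simp only: if_False)

lemma p_in: "0 \<le> k \<Longrightarrow> k \<le> int (2 * n) \<Longrightarrow>
   p k ** p k = p k \<and> cmat_adj (p k) = p k \<and> {v. p k *v v = v} = {v. Om *v v = lam k *s v}"
  unfolding spin_pi_def lam_def using eig_proj_char[of Om] by simp

lemma p_idem: "p k ** p k = p k"
  by (cases "0 \<le> k \<and> k \<le> int (2 * n)") (auto simp: p_in p_out)

lemma p_adj: "cmat_adj (p k) = p k"
  by (cases "0 \<le> k \<and> k \<le> int (2 * n)") (auto simp: p_in p_out)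

lemma p_fix: "p k *v (p k *v v) = p k *v v"
  by (simp add: matrix_vector_mul_assoc p_idem)

lemma p_eig: "Om *v (p k *v v) = lam k *s (p k *v v)"
proof (cases "0 \<le> k \<and> k \<le> int (2 * n)")
  case True
  then have "p k *v v \<in> {v. p k *v v = v}" using p_fix by simp
  then show ?thesis using p_in True by blast
next
  case False then show ?thesis by (simp add: p_out vec_eq_iff)
qed

lemma Om_p: "Om ** p k = lam k *c p k"
  by (simp add: matrix_eq matrix_vector_mul_assoc[symmetric] p_eig cs_mv)

lemma mv_minus_left: "(- A) *v v = - (A *v (v::complex^'s))"
  by (simp add: matrix_vector_mult_def vec_eq_iff sum_negf)
lemma hp_minus_right: "hp u (- v) = - hp u v"
  by (simp add: hp_def sum_negf)

lemma lam_inj: "lam a = lam b \<Longrightarrow> a = b"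
  by (simp add: lam_def)

lemma p_orth: assumes "a \<noteq> b" shows "p a ** p b = 0"
proof (rule matrix_eq_hp)
  fix u v
  let ?x = "p b *v u" and ?y = "p a *v v"
  have "hp (Om *v ?x) ?y = hp ?x (cmat_adj Om *v ?y)" by (rule hp_adj)
  also have "\<dots> = hp ?x (- (Om *v ?y))" by (simp only: Om_adj mv_minus_left)
  finally have "lam b * hp ?x ?y = - (cnj (lam a) * hp ?x ?y)"
    by (simp add: p_eig hp_smult_left hp_smult_right hp_minus_right)
  moreover have "- cnj (lam a) = lam a" by (simp add: lam_def)
  ultimately have "lam b * hp ?x ?y = lam a * hp ?x ?y" by (metis minus_mult_left)
  then have "(lam b - lam a) * hp ?x ?y = 0" by (simp add: left_diff_distrib)
  moreover have "lam b \<noteq> lam a" using assms lam_inj by metis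
  ultimately have "hp ?x ?y = 0" by simp
  moreover have "hp ((p a ** p b) *v u) v = hp ?x ?y"
    unfolding matrix_vector_mul_assoc[symmetric] hp_adj[of "p a"] p_adj ..
  ultimately show "hp ((p a ** p b) *v u) v = hp (0 *v u) v" by simp
qed

lemma eig10: assumes "Om *v w = l *s w" shows "Om *v (g10 x *v w) = (l - 2 * \<i>) *s (g10 x *v w)"
proof -
  have "Om *v (g10 x *v w) = (g10 x ** Om) *v w + (- 2 * \<i>) *s (g10 x *v w)"
    by (simp only: matrix_vector_mul_assoc comm10 matrix_vector_mult_add_rdistrib cs_mv)
  also have "(g10 x ** Om) *v w = l *s (g10 x *v w)"
    by (simp only: matrix_vector_mul_assoc[symmetric] assms mv_cs)
  finally show ?thesis by (simp add: vec_eq_iff algebra_simps)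
qed

lemma eig01: assumes "Om *v w = l *s w" shows "Om *v (g01 x *v w) = (l + 2 * \<i>) *s (g01 x *v w)"
proof -
  have "Om *v (g01 x *v w) = (g01 x ** Om) *v w + (2 * \<i>) *s (g01 x *v w)"
    by (simp only: matrix_vector_mul_assoc comm01 matrix_vector_mult_add_rdistrib cs_mv)
  also have "(g01 x ** Om) *v w = l *s (g01 x *v w)"
    by (simp only: matrix_vector_mul_assoc[symmetric] assms mv_cs)
  finally show ?thesis by (simp add: vec_eq_iff algebra_simps)
qed

lemma dim2m: "DIM('a) = 2 * (2 * n)" by (rule dimn)

lemma F4: "p (l + 1) ** g10 x ** p l = g10 x ** p l"
proof (cases "0 \<le> l \<and> l \<le> int (2 * n)")
  case False then show ?thesis by (simp add: p_out)
next
  case True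
  show ?thesis
  proof (subst matrix_eq, intro allI)
    fix v
    let ?w = "g10 x *v (p l *v v)"
    have ev: "Om *v ?w = lam (l + 1) *s ?w"
      using eig10[OF p_eig[of l v]] by (simp add: lam_def algebra_simps)
    show "(p (l + 1) ** g10 x ** p l) *v v = (g10 x ** p l) *v v"
    proof (cases "l + 1 \<le> int (2 * n)")
      case True
      then have "?w \<in> {v. p (l + 1) *v v = v}" using p_in[of "l+1"] ev \<open>0 \<le> l \<and> _\<close> by auto
      then show ?thesis by (simp add: matrix_vector_mul_assoc[symmetric])
    next
      case False
      then have l: "l = int (2 * n)" using \<open>0 \<le> l \<and> _\<close> by simp
      have "Om *v ?w = (- \<i> * of_nat (2 * n + 2)) *s ?w"
        using ev by (simp add: lam_def l algebra_simps)
      then have "?w = 0" using no_eig_bot[of "2 * n"] dimn by simp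
      then show ?thesis using False by (simp add: matrix_vector_mul_assoc[symmetric] p_out)
    qed
  qed
qed

lemma F5: "p (l - 1) ** g01 x ** p l = g01 x ** p l"
proof (cases "0 \<le> l \<and> l \<le> int (2 * n)")
  case False then show ?thesis by (simp add: p_out)
next
  case True
  show ?thesis
  proof (subst matrix_eq, intro allI)
    fix v
    let ?w = "g01 x *v (p l *v v)"
    have ev: "Om *v ?w = lam (l - 1) *s ?w"
      using eig01[OF p_eig[of l v]] by (simp add: lam_def algebra_simps)
    show "(p (l - 1) ** g01 x ** p l) *v v = (g01 x ** p l) *v v"
    proof (cases "0 \<le> l - 1")
      case True
      then have "?w \<in> {v. p (l - 1) *v v = v}" using p_in[of "l-1"] ev \<open>0 \<le> l \<and> _\<close> by auto
      then show ?thesis by (simp add: matrix_vector_mul_assoc[symmetric])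
    next
      case False
      then have l: "l = 0" using \<open>0 \<le> l \<and> _\<close> by simp
      have "Om *v ?w = (\<i> * of_nat (2 * n + 2)) *s ?w"
        using ev by (simp add: lam_def l algebra_simps)
      then have "?w = 0" using no_eig_top[of "2 * n"] dimn by simp
      then show ?thesis using False by (simp add: matrix_vector_mul_assoc[symmetric] p_out)
    qed
  qed
qed

lemma F6: "p k ** g10 x = g10 x ** p (k - 1)"
proof -
  have "cmat_adj (p (k - 1) ** g01 x ** p k) = cmat_adj (g01 x ** p k)"
    using F5[of k x] by simp
  then have 1: "p k ** g10 x ** p (k - 1) = p k ** g10 x"
    by (simp add: adj_mult p_adj adj01 mult_minus_left mult_minus_right matrix_mul_assoc)
  have 2: "p k ** g10 x ** p (k - 1) = g10 x ** p (k - 1)" using F4[of "k - 1" x] by simp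
  show ?thesis using 1 2 by simp
qed

lemma F7: "p k ** g01 x = g01 x ** p (k + 1)"
proof -
  have "cmat_adj (p (k + 1) ** g10 x ** p k) = cmat_adj (g10 x ** p k)"
    using F4[of k x] by simp
  then have 1: "p k ** g01 x ** p (k + 1) = p k ** g01 x"
    by (simp add: adj_mult p_adj adj10 mult_minus_left mult_minus_right matrix_mul_assoc)
  have 2: "p k ** g01 x ** p (k + 1) = g01 x ** p (k + 1)" using F5[of "k + 1" x] by simp
  show ?thesis using 1 2 by simp
qed

end



context cliffn begin

lemma adj_G1P: "cmat_adj (g10 x ** p k) = - (g01 x ** p (k + 1))"
  by (simp add: adj_mult p_adj adj10 mult_minus_right F7)
lemma adj_G0P: "cmat_adj (g01 x ** p k) = - (g10 x ** p (k - 1))"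
  by (simp add: adj_mult p_adj adj01 mult_minus_right F6)

lemma alpha_rel: "alpha1 (2 * n) + beta1 (2 * n) = alpha2 (2 * n) + beta2 (2 * n)"
proof -
  let ?m = "real (2 * n)"
  have m2: "?m \<ge> 2" using n1 by simp
  have "(?m + 1) * alpha1 (2 * n) = sqrt ((?m - 1) * (?m + 1))"
  proof -
    have "(?m + 1) * alpha1 (2 * n) = sqrt ((?m + 1)^2) * sqrt ((?m - 1) / (?m + 1))"
      using m2 by (simp add: alpha1_def)
    also have "\<dots> = sqrt ((?m + 1)^2 * ((?m - 1) / (?m + 1)))" by (rule real_sqrt_mult[symmetric])
    also have "(?m + 1)^2 * ((?m - 1) / (?m + 1)) = (?m - 1) * (?m + 1)"
      using m2 by (simp add: power2_eq_square field_simps)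
    finally show ?thesis .
  qed
  moreover have "(?m - 1) * alpha2 (2 * n) = sqrt ((?m - 1) * (?m + 1))"
  proof -
    have "(?m - 1) * alpha2 (2 * n) = sqrt ((?m - 1)^2) * sqrt ((?m + 1) / (?m - 1))"
      using m2 by (simp add: alpha2_def)
    also have "\<dots> = sqrt ((?m - 1)^2 * ((?m + 1) / (?m - 1)))" by (rule real_sqrt_mult[symmetric])
    also have "(?m - 1)^2 * ((?m + 1) / (?m - 1)) = (?m - 1) * (?m + 1)"
      using m2 by (simp add: power2_eq_square field_simps)
    finally show ?thesis .
  qed
  ultimately have "(?m + 1) * alpha1 (2 * n) = (?m - 1) * alpha2 (2 * n)" by simp
  then show ?thesis unfolding beta1_def beta2_def by (simp add: algebra_simps)
qed

lemma part1: "selfadjoint (frakT gam J n X + gam X ** calT gam J n)"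
proof -
  define a1 where "a1 = complex_of_real (alpha1 (2 * n))"
  define a2 where "a2 = complex_of_real (alpha2 (2 * n))"
  define b1 where "b1 = complex_of_real (beta1 (2 * n))"
  define b2 where "b2 = complex_of_real (beta2 (2 * n))"
  define c0 where "c0 = - \<i> * of_nat (2 * n + 1)"
  have rel: "b2 = a1 + b1 - a2" using alpha_rel unfolding a1_def a2_def b1_def b2_def
    by (metis add_diff_cancel_left' of_real_add of_real_diff)
  have ix: "int n - 2 + 1 = int n - 1" "int n - 1 + 1 = int n" "int n + 1 - 1 = int n" "int n - 1 - 1 = int n - 2"
    by simp_all
  have F: "frakT gam J n X = \<i> *c (a1 *c (g10 X ** p (int n - 1)) + a2 *c (g01 X ** p (int n))
      + b1 *c (g10 X ** p (int n - 2)) + b2 *c (g01 X ** p (int n + 1)))"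
    by (simp add: frakT_def a1_def a2_def b1_def b2_def Let_def)
  have T: "calT gam J n = c0 *c mat 1 + (\<i> * b1) *c p (int n - 1) + (\<i> * b2) *c p (int n)"
    by (simp add: calT_def c0_def b1_def b2_def Let_def)
  have adjF: "cmat_adj (frakT gam J n X) = \<i> *c (a1 *c (g01 X ** p (int n)) + a2 *c (g10 X ** p (int n - 1))
      + b1 *c (g01 X ** p (int n - 1)) + b2 *c (g10 X ** p (int n)))"
    unfolding F
    apply (simp only: adj_cs adj_add adj_G1P adj_G0P ix)
    apply (simp add: a1_def a2_def b1_def b2_def vec_eq_iff algebra_simps)
    done
  have G: "gam X ** calT gam J n = c0 *c (g10 X + g01 X) + (\<i> * b1) *c (g10 X ** p (int n - 1) + g01 X ** p (int n - 1))
     + (\<i> * b2) *c (g10 X ** p (int n) + g01 X ** p (int n))"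
    unfolding T g10_g01[symmetric, of X]
    by (simp only: matrix_add_ldistrib mult_add_left cs_mult_right matrix_mul_rid cs_add)
  have adjG: "cmat_adj (gam X ** calT gam J n) = c0 *c (g10 X + g01 X)
     + (\<i> * b1) *c (g10 X ** p (int n - 2) + g01 X ** p (int n))
     + (\<i> * b2) *c (g10 X ** p (int n - 1) + g01 X ** p (int n + 1))"
  proof -
    have "cmat_adj (gam X ** calT gam J n) = cmat_adj (calT gam J n) ** (- (g10 X + g01 X))"
      by (simp only: adj_mult g_adj g10_g01)
    also have "cmat_adj (calT gam J n) = cnj c0 *c mat 1 + cnj (\<i> * b1) *c p (int n - 1) + cnj (\<i> * b2) *c p (int n)"
      unfolding T by (simp only: adj_add adj_cs adj_mat p_adj complex_cnj_one)
    finally show ?thesis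
      apply (simp only: mult_add_left cs_mult_left matrix_mul_lid mult_minus_right matrix_add_ldistrib F6 F7 ix)
      apply (simp add: c0_def b1_def b2_def vec_eq_iff algebra_simps)
      done
  qed
  show ?thesis unfolding selfadjoint_def adj_add adjF adjG
    unfolding F G rel by (simp add: vec_eq_iff algebra_simps)
qed

end



lemma cs_sum_left: "(\<Sum>j\<in>S. c j) *c A = (\<Sum>j\<in>S. c j *c A)"
  by (induct S rule: infinite_finite_induct) (auto simp: cs_addc)

context cliffn begin

lemma frameJ:
  assumes on: "\<forall>i<DIM('a). \<forall>j<DIM('a). inner (e i) (e j) = (if i = j then 1 else 0)"
  shows "(\<Sum>j<DIM('a). gam (e j) ** gam (J (e j))) = - (2 *c Om)"
proof -
  let ?D = "DIM('a)"
  have s1: "gam (e j) ** gam (J (e j)) = (\<Sum>b\<in>Basis. \<Sum>c\<in>Basis.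
      complex_of_real (inner (e j) b * inner (J (e j)) c) *c (gam b ** gam c))" for j
    apply (subst g_expand[of "e j"], subst g_expand[of "J (e j)"])
    apply (simp only: mult_sum_left)
    apply (simp only: mult_sum_right cs_mult_left cs_mult_right cs_cs of_real_mult)
    apply (simp add: mult.commute)
    done
  have pv: "(\<Sum>j<?D. inner (e j) b * inner (J (e j)) c) = - inner b (J c)" for b c
  proof -
    have "(\<Sum>j<?D. inner (e j) b * inner (J (e j)) c) = - (\<Sum>j<?D. inner (e j) b * inner (e j) (J c))"
      by (simp add: J_skew[of "e _" c] sum_negf)
    then show ?thesis using parseval_frame[OF on] by simp
  qed
  have "(\<Sum>j<?D. gam (e j) ** gam (J (e j))) = (\<Sum>j<?D. \<Sum>b\<in>Basis. \<Sum>c\<in>Basis.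
      complex_of_real (inner (e j) b * inner (J (e j)) c) *c (gam b ** gam c))"
    by (simp only: s1)
  also have "\<dots> = (\<Sum>b\<in>Basis. \<Sum>j<?D. \<Sum>c\<in>Basis.
      complex_of_real (inner (e j) b * inner (J (e j)) c) *c (gam b ** gam c))"
    by (rule sum.swap)
  also have "\<dots> = (\<Sum>b\<in>Basis. \<Sum>c\<in>Basis. \<Sum>j<?D.
      complex_of_real (inner (e j) b * inner (J (e j)) c) *c (gam b ** gam c))"
    by (rule sum.cong[OF refl], rule sum.swap)
  also have "\<dots> = (\<Sum>b\<in>Basis. \<Sum>c\<in>Basis.
      complex_of_real (\<Sum>j<?D. inner (e j) b * inner (J (e j)) c) *c (gam b ** gam c))"
    by (simp only: of_real_sum cs_sum_left)
  also have "\<dots> = (\<Sum>b\<in>Basis. \<Sum>c\<in>Basis. - (complex_of_real (inner b (J c)) *c (gam b ** gam c)))"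
    by (simp add: pv vec_eq_iff)
  also have "\<dots> = - (\<Sum>b\<in>Basis. \<Sum>c\<in>Basis. complex_of_real (inner b (J c)) *c (gam b ** gam c))"
    by (simp add: sum_negf)
  also have "(\<Sum>b\<in>Basis. \<Sum>c\<in>Basis. complex_of_real (inner b (J c)) *c (gam b ** gam c)) = 2 *c Om"
    by (simp add: gamma_Omega_def Omega_def cs_cs)
  finally show ?thesis .
qed

lemma frame_sq:
  assumes on: "\<forall>i<DIM('a). \<forall>j<DIM('a). inner (e i) (e j) = (if i = j then 1 else 0)"
  shows "(\<Sum>j<DIM('a). gam (e j) ** gam (e j)) = - (of_nat DIM('a) *c mat 1)"
proof -
  have "(\<Sum>j<DIM('a). gam (e j) ** gam (e j)) = (\<Sum>j<DIM('a). - mat 1)"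
  proof (rule sum.cong[OF refl])
    fix j assume "j \<in> {..<DIM('a)}"
    then have "inner (e j) (e j) = 1" using on by auto
    then have "norm (e j) = 1" by (simp add: norm_eq_sqrt_inner)
    then show "gam (e j) ** gam (e j) = - mat 1" by (simp add: g_sq)
  qed
  then show ?thesis by (simp only: sum_const_cs sum_negf cs_minus card_lessThan)
qed

lemma S10:
  assumes on: "\<forall>i<DIM('a). \<forall>j<DIM('a). inner (e i) (e j) = (if i = j then 1 else 0)"
  shows "(\<Sum>j<DIM('a). gam (e j) ** g10 (e j)) = (- of_nat (2 * n)) *c mat 1 + \<i> *c Om"
proof -
  have "(\<Sum>j<DIM('a). gam (e j) ** g10 (e j)) = (1/2) *c ((\<Sum>j<DIM('a). gam (e j) ** gam (e j))
        - \<i> *c (\<Sum>j<DIM('a). gam (e j) ** gam (J (e j))))"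
    unfolding gam10_def by (simp only: cs_mult_right mult_diff_right cs_sum[symmetric] sum_subtractf cs_diff)
  also have "\<dots> = (1/2) *c (- (of_nat DIM('a) *c mat 1) - \<i> *c (- (2 *c Om)))"
    by (simp only: frameJ[OF on] frame_sq[OF on])
  finally show ?thesis using dimn by (simp add: vec_eq_iff algebra_simps)
qed

lemma S01:
  assumes on: "\<forall>i<DIM('a). \<forall>j<DIM('a). inner (e i) (e j) = (if i = j then 1 else 0)"
  shows "(\<Sum>j<DIM('a). gam (e j) ** g01 (e j)) = (- of_nat (2 * n)) *c mat 1 - \<i> *c Om"
proof -
  have "(\<Sum>j<DIM('a). gam (e j) ** g01 (e j)) = (1/2) *c ((\<Sum>j<DIM('a). gam (e j) ** gam (e j))
        + \<i> *c (\<Sum>j<DIM('a). gam (e j) ** gam (J (e j))))"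
    unfolding gam01_def by (simp only: cs_mult_right matrix_add_ldistrib cs_sum[symmetric] sum.distrib cs_add)
  also have "\<dots> = (1/2) *c (- (of_nat DIM('a) *c mat 1) + \<i> *c (- (2 *c Om)))"
    by (simp only: frameJ[OF on] frame_sq[OF on])
  also have "\<dots> = (- of_nat (2 * n)) *c mat 1 - \<i> *c Om"
    by (simp add: dimn vec_eq_iff algebra_simps)
  finally show ?thesis .
qed

lemma part2:
  assumes on: "\<forall>i<2 * (2 * n). \<forall>j<2 * (2 * n). inner (e i) (e j) = (if i = j then 1 else 0)"
  shows "(\<Sum>j<2 * (2 * n). gam (e j) ** frakT gam J n (e j))
           = calT gam J n ** prV gam J n
             - (\<i> * complex_of_real (beta1 (2 * n) * (real (2 * n) + 4))) *c spin_pi gam J (2 * n) (int n - 2)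
             - (\<i> * complex_of_real (beta2 (2 * n) * (real (2 * n) + 2))) *c spin_pi gam J (2 * n) (int n + 1)"
proof -
  have on': "\<forall>i<DIM('a). \<forall>j<DIM('a). inner (e i) (e j) = (if i = j then 1 else 0)"
    using on dimn by simp
  define a1 where "a1 = complex_of_real (alpha1 (2 * n))"
  define a2 where "a2 = complex_of_real (alpha2 (2 * n))"
  define b1 where "b1 = complex_of_real (beta1 (2 * n))"
  define b2 where "b2 = complex_of_real (beta2 (2 * n))"
  define c0 where "c0 = - \<i> * of_nat (2 * n + 1)"
  define P1 where "P1 = p (int n - 1)"
  define P0 where "P0 = p (int n)"
  define P2 where "P2 = p (int n - 2)"
  define P3 where "P3 = p (int n + 1)"
  have F: "frakT gam J n x = \<i> *c (a1 *c (g10 x ** P1) + a2 *c (g01 x ** P0)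
      + b1 *c (g10 x ** P2) + b2 *c (g01 x ** P3))" for x
    by (simp add: frakT_def a1_def a2_def b1_def b2_def P0_def P1_def P2_def P3_def Let_def)
  have T: "calT gam J n = c0 *c mat 1 + (\<i> * b1) *c P1 + (\<i> * b2) *c P0"
    by (simp add: calT_def c0_def b1_def b2_def P0_def P1_def Let_def)
  have trm: "gam x ** frakT gam J n x = \<i> *c (a1 *c ((gam x ** g10 x) ** P1) + a2 *c ((gam x ** g01 x) ** P0)
      + b1 *c ((gam x ** g10 x) ** P2) + b2 *c ((gam x ** g01 x) ** P3))" for x
    unfolding F by (simp only: matrix_add_ldistrib cs_mult_right matrix_mul_assoc)
  have "(\<Sum>j<2 * (2 * n). gam (e j) ** frakT gam J n (e j))
     = \<i> *c (a1 *c ((\<Sum>j<DIM('a). gam (e j) ** g10 (e j)) ** P1) + a2 *c ((\<Sum>j<DIM('a). gam (e j) ** g01 (e j)) ** P0)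
      + b1 *c ((\<Sum>j<DIM('a). gam (e j) ** g10 (e j)) ** P2) + b2 *c ((\<Sum>j<DIM('a). gam (e j) ** g01 (e j)) ** P3))"
    unfolding trm dimn by (simp only: mult_sum_left cs_sum[symmetric] sum.distrib cs_add)
  also have "\<dots> = \<i> *c (a1 *c ((- of_nat (2 * n)) *c P1 + \<i> *c (lam (int n - 1) *c P1))
      + a2 *c ((- of_nat (2 * n)) *c P0 - \<i> *c (lam (int n) *c P0))
      + b1 *c ((- of_nat (2 * n)) *c P2 + \<i> *c (lam (int n - 2) *c P2))
      + b2 *c ((- of_nat (2 * n)) *c P3 - \<i> *c (lam (int n + 1) *c P3)))"
    unfolding S10[OF on'] S01[OF on'] P0_def P1_def P2_def P3_def
    by (simp only: mult_add_left mult_diff_left cs_mult_left matrix_mul_lid Om_p)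
  finally have L: "(\<Sum>j<2 * (2 * n). gam (e j) ** frakT gam J n (e j)) = \<dots>" .
  have ne: "int n - 1 \<noteq> int n" by simp
  have R: "calT gam J n ** prV gam J n = c0 *c (P1 + P0) + (\<i> * b1) *c P1 + (\<i> * b2) *c P0"
    unfolding T prV_def P0_def[symmetric] P1_def[symmetric]
    using p_orth[OF ne] p_orth[OF ne[symmetric]] p_idem[of "int n"] p_idem[of "int n - 1"]
    unfolding P0_def[symmetric] P1_def[symmetric]
    by (simp add: matrix_add_ldistrib mult_add_left cs_mult_left cs_add)
  show ?thesis unfolding L R P2_def[symmetric] P3_def[symmetric]
    by (simp add: vec_eq_iff lam_def a1_def a2_def b1_def b2_def c0_def beta1_def beta2_def algebra_simps)
qed

end

theorem mainTheorem5:
  fixes n :: nat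
    and J :: "'a::euclidean_space \<Rightarrow> 'a"
    and gam :: "'a \<Rightarrow> complex^'s^'s"
  assumes "n \<ge> 1"
    and "DIM('a) = 2 * (2 * n)"
    and "CARD('s) = 2 ^ (2 * n)"
    and "almost_hermitian J"
    and "clifford_mult gam"
  shows "(\<forall>X. selfadjoint (frakT gam J n X + gam X ** calT gam J n))
    \<and> (\<forall>e :: nat \<Rightarrow> 'a.
         (\<forall>i<2 * (2 * n). \<forall>j<2 * (2 * n). inner (e i) (e j) = (if i = j then 1 else 0)) \<longrightarrow>
         (\<Sum>j<2 * (2 * n). gam (e j) ** frakT gam J n (e j))
           = calT gam J n ** prV gam J n
             - (\<i> * complex_of_real (beta1 (2 * n) * (real (2 * n) + 4))) *c spin_pi gam J (2 * n) (int n - 2)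
             - (\<i> * complex_of_real (beta2 (2 * n) * (real (2 * n) + 2))) *c spin_pi gam J (2 * n) (int n + 1))"
proof -
  interpret cliffn gam J n
    using assms by unfold_locales auto
  show ?thesis using part1 part2 by blast
qed

end
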